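(* Let $b>a>0$. Let $\mathcal G$ be the set of measurable $g:\mathbb{R}_+\to\mathbb{R}_+$ with $g(s)\le 1/s$ for a.e. $s>0$, and for $g\in\mathcal G$ set $I_a(g)=\int_0^\infty g^{1+a}$, $I_b(g)=\int_0^\infty g^{1+b}$, $\mathcal G_b=\{g\in\mathcal G:0<I_b(g)<\infty\}$. Then $$\sup\{I_b(g)^{-a/b}I_a(g):g\in\mathcal G_b\}=\frac{a+1}{a}\Big[\frac{b}{b+1}\Big]^{a/b},$$ and the supremum is attained at $g(s)=\min\{k,1/s\}$ for any $k>0$. *)

theory Defs
  imports "HOL-Analysis.Analysis"
begin

definition classG :: "(real \<Rightarrow> real) set" where
  "classG = {g. g \<in> borel_measurable lborel \<and> (\<forall>s>0. 0 \<le> g s) \<and>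
               (AE s in lborel. s > 0 \<longrightarrow> g s \<le> 1 / s)}"

definition Ipow :: "real \<Rightarrow> (real \<Rightarrow> real) \<Rightarrow> ennreal" where
  "Ipow p g = (\<integral>\<^sup>+ s. ennreal (g s powr (1 + p)) * indicator {0<..} s \<partial>lborel)"

definition classGb :: "real \<Rightarrow> (real \<Rightarrow> real) set" where
  "classGb b = {g \<in> classG. 0 < Ipow b g \<and> Ipow b g < \<infinity>}"

text \<open>The functional I_b(g)^(-a/b) * I_a(g) (I_b(g) is finite and positive on G_b).\<close>
definition ratioF :: "real \<Rightarrow> real \<Rightarrow> (real \<Rightarrow> real) \<Rightarrow> ennreal" where
  "ratioF a b g = ennreal (enn2real (Ipow b g) powr (- a / b)) * Ipow a g"

end

theory Submission imports Defs begin

definition ff :: "real \<Rightarrow> real \<Rightarrow> real \<Rightarrow> real \<Rightarrow> real" where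
  "ff a b k x = x powr (1+a) - ((1+a)/(1+b) * k powr (a-b)) * x powr (1+b)"

lemma ff_deriv:
  assumes "0 < a" "a < b" "x > 0"
  shows "(ff a b k has_real_derivative ((1+a) * x powr a - (1+a) * k powr (a-b) * x powr b)) (at x)"
  unfolding ff_def using assms
  apply (intro derivative_eq_intros refl)
  apply auto
  done

lemma ff_cont: assumes "0 < a" "a < b" shows "continuous_on {0..} (ff a b k)"
  unfolding ff_def using assms
  by (intro continuous_intros continuous_on_powr') auto

lemma ff_cont': assumes "0 < a" "a < b" "0 \<le> x" shows "continuous_on {x..y} (ff a b k)"
  by (rule continuous_on_subset[OF ff_cont[OF assms(1,2)]]) (use assms in auto)

lemma key_ineq:
  fixes a b k x :: real
  assumes "0 < a" "a < b" "k > 0" "x > 0"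
  shows "k powr (a-b) * x powr b = x powr a * (x powr (b-a) * k powr (a-b))"
proof -
  have "x powr a * x powr (b-a) = x powr (a + (b-a))" by (rule powr_add[symmetric])
  hence "x powr b = x powr a * x powr (b-a)" by simp
  thus ?thesis by (simp add: algebra_simps)
qed

lemma ff_mono:
  assumes "0 < a" "a < b" "k > 0" "0 \<le> x" "x \<le> y" "y \<le> k"
  shows "ff a b k x \<le> ff a b k y"
proof (rule DERIV_nonneg_imp_increasing_open[OF assms(5)])
  fix t assume t: "x < t" "t < y"
  have tp: "t > 0" using t assms by auto
  have "t powr (b-a) \<le> k powr (b-a)" using tp t assms by (intro powr_mono2) auto
  hence "t powr (b-a) * k powr (a-b) \<le> k powr (b-a) * k powr (a-b)"
    by (intro mult_right_mono) auto
  also have "\<dots> = 1" using assms by (simp add: powr_add[symmetric])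
  finally have "k powr (a-b) * t powr b \<le> t powr a"
    unfolding key_ineq[OF assms(1-3) tp]
    by (metis mult.right_neutral mult_left_mono powr_ge_zero)
  hence "0 \<le> (1+a) * (t powr a - k powr (a-b) * t powr b)"
    using assms by (intro mult_nonneg_nonneg) auto
  hence "0 \<le> (1+a) * t powr a - (1+a) * k powr (a-b) * t powr b"
    by (simp add: algebra_simps)
  thus "\<exists>y. (ff a b k has_real_derivative y) (at t) \<and> 0 \<le> y"
    using ff_deriv[OF assms(1,2) tp] by blast
qed (rule ff_cont'[OF assms(1,2,4)])

lemma ff_anti:
  assumes "0 < a" "a < b" "k > 0" "k \<le> x" "x \<le> y"
  shows "ff a b k y \<le> ff a b k x"
proof (rule DERIV_nonpos_imp_decreasing_open[OF assms(5)])
  fix t assume t: "x < t" "t < y"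
  have tp: "t > 0" using t assms by auto
  have "t powr (b-a) \<ge> k powr (b-a)" using tp t assms by (intro powr_mono2) auto
  hence "t powr (b-a) * k powr (a-b) \<ge> k powr (b-a) * k powr (a-b)"
    by (intro mult_right_mono) auto
  also have "k powr (b-a) * k powr (a-b) = 1" using assms by (simp add: powr_add[symmetric])
  finally have "k powr (a-b) * t powr b \<ge> t powr a"
    unfolding key_ineq[OF assms(1-3) tp]
    by (metis mult.right_neutral mult_left_mono powr_ge_zero)
  hence "0 \<ge> (1+a) * (t powr a - k powr (a-b) * t powr b)"
    using assms by (intro mult_nonneg_nonpos) auto
  hence "0 \<ge> (1+a) * t powr a - (1+a) * k powr (a-b) * t powr b"
    by (simp add: algebra_simps)
  thus "\<exists>y. (ff a b k has_real_derivative y) (at t) \<and> y \<le> 0"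
    using ff_deriv[OF assms(1,2) tp] by blast
qed (rule ff_cont', use assms in auto)

lemma pointwise:
  assumes "0 < a" "a < b" "k > 0" "s > 0" "0 \<le> x" "x \<le> 1/s"
  shows "ff a b k x \<le> ff a b k (min k (1/s))"
proof (cases "k \<le> 1/s")
  case True
  then show ?thesis using assms ff_mono[of a b k x k] ff_anti[of a b k k x]
    by (cases "x \<le> k") auto
next
  case False
  then show ?thesis using assms ff_mono[of a b k x "1/s"] by auto
qed

lemma Ipow_gk:
  assumes p: "p > 0" and k: "k > 0"
  shows "Ipow p (\<lambda>s. min k (1/s)) = ennreal (k powr p * (p+1)/p)"
proof -
  have eq: "ennreal (min k (1/s) powr (1+p)) * indicator {0<..} s =
        ennreal (k powr (1+p)) * indicator {0<..<1/k} s + ennreal (s powr (-(1+p))) * indicator {1/k..} s"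
    for s :: real
  proof (cases "s > 0")
    case True
    show ?thesis
    proof (cases "s < 1/k")
      case True
      hence "k \<le> 1/s" using \<open>s>0\<close> k by (simp add: field_simps)
      then show ?thesis using True \<open>s>0\<close> by (simp add: indicator_def)
    next
      case False
      hence "1/s \<le> k" using \<open>s>0\<close> k by (simp add: field_simps)
      have m: "s powr (-(1+p)) = 1 / s powr (1+p)" by (rule powr_minus_divide)
      have "min k (1/s) powr (1+p) = s powr (-(1+p))" using \<open>s>0\<close> \<open>1/s \<le> k\<close>
        unfolding m by (simp add: powr_divide)
      then show ?thesis using False \<open>s>0\<close> by (simp add: indicator_def)
    qed
  next
    case False
    moreover have "\<not> 1/k \<le> s" using False k by (smt (verit) divide_pos_pos)
    ultimately show ?thesis by (simp add: indicator_def)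
  qed
  have i1: "(\<integral>\<^sup>+ s. ennreal (k powr (1+p)) * indicator {0<..<1/k} s \<partial>lborel) = ennreal (k powr (1+p) * (1/k))"
    using k by (simp add: nn_integral_cmult_indicator ennreal_mult[symmetric])
  have hi: "((\<lambda>x. x powr (-(1+p))) has_integral -((1/k) powr (-(1+p)+1)) / (-(1+p)+1)) {1/k..}"
    using p k by (intro has_integral_powr_to_inf) auto
  have i2: "(\<integral>\<^sup>+ s. ennreal (s powr (-(1+p))) * indicator {1/k..} s \<partial>lborel) = ennreal (-((1/k) powr (-(1+p)+1)) / (-(1+p)+1))"
    by (rule nn_integral_has_integral_lebesgue'[OF _ hi]) auto
  have "Ipow p (\<lambda>s. min k (1/s)) = (\<integral>\<^sup>+ s. ennreal (k powr (1+p)) * indicator {0<..<1/k} s \<partial>lborel)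
     + (\<integral>\<^sup>+ s. ennreal (s powr (-(1+p))) * indicator {1/k..} s \<partial>lborel)"
    unfolding Ipow_def eq
    by (rule nn_integral_add) auto
  also have "\<dots> = ennreal (k powr (1+p) * (1/k)) + ennreal (-((1/k) powr (-(1+p)+1)) / (-(1+p)+1))"
    by (simp only: i1 i2)
  also have "\<dots> = ennreal (k powr (1+p) * (1/k) + (-((1/k) powr (-(1+p)+1)) / (-(1+p)+1)))"
    using k p by (intro ennreal_plus[symmetric]) (auto simp: divide_nonpos_neg)
  also have "k powr (1+p) * (1/k) + (-((1/k) powr (-(1+p)+1)) / (-(1+p)+1)) = k powr p * (p+1)/p"
  proof -
    have "k powr (1+p) * (1/k) = k powr p" using k by (simp add: powr_add)
    moreover have "(1/k) powr (-(1+p)+1) = k powr p" using k by (simp add: powr_divide powr_minus_divide)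
    ultimately show ?thesis using p by (simp add: field_simps)
  qed
  finally show ?thesis .
qed

lemma gk_G: assumes k: "k > 0" shows "(\<lambda>s. min k (1/s)) \<in> classG"
  unfolding classG_def using k by (auto intro!: always_eventually)

lemma ratio_gk:
  assumes "0 < a" "a < b" "k > 0"
  shows "ratioF a b (\<lambda>s. min k (1 / s)) = ennreal ((a + 1) / a * (b / (b + 1)) powr (a / b))"
proof -
  have ab: "a > 0" "b > 0" using assms by auto
  have pos: "k powr b * (b+1)/b \<ge> 0" using ab by auto
  have "(k powr b * (b+1)/b) powr (-a/b) = (k powr b) powr (-a/b) * ((b+1)/b) powr (-a/b)"
    using ab by (simp add: powr_mult[symmetric])
  also have "(k powr b) powr (-a/b) = k powr (-a)" using ab by (simp add: powr_powr)
  also have "((b+1)/b) powr (-a/b) = (b/(b+1)) powr (a/b)"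
    using ab by (simp add: powr_minus powr_divide)
  finally have e: "(k powr b * (b+1)/b) powr (-a/b) = k powr (-a) * (b/(b+1)) powr (a/b)" .
  have e2: "k powr (-a) * k powr a = 1" using assms by (simp add: powr_add[symmetric])
  have "ratioF a b (\<lambda>s. min k (1 / s)) = ennreal ((k powr b * (b+1)/b) powr (-a/b)) * ennreal (k powr a * (a+1)/a)"
    unfolding ratioF_def using ab assms by (simp add: Ipow_gk)
  also have "\<dots> = ennreal ((k powr b * (b+1)/b) powr (-a/b) * (k powr a * (a+1)/a))"
    by (rule ennreal_mult[symmetric]) (use ab in auto)
  also have "(k powr b * (b+1)/b) powr (-a/b) * (k powr a * (a+1)/a) = (k powr (-a) * k powr a) * ((a + 1) / a * (b / (b + 1)) powr (a / b))"
    unfolding e by (simp add: algebra_simps)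
  finally show ?thesis unfolding e2 by simp
qed

lemma gk_Gb:
  assumes "0 < a" "a < b" "k > 0"
  shows "(\<lambda>s. min k (1 / s)) \<in> classGb b"
  unfolding classGb_def using assms gk_G[OF assms(3)] Ipow_gk[of b k] by auto


lemma Ipow_compare:
  assumes ab: "0 < a" "a < b" and k: "k > 0" and g: "g \<in> classG"
    and eqb: "Ipow b g = Ipow b (\<lambda>s. min k (1 / s))"
  shows "Ipow a g \<le> Ipow a (\<lambda>s. min k (1 / s))"
proof -
  define y where "y = (\<lambda>s::real. min k (1 / s))"
  define l where "l = (1+a)/(1+b) * k powr (a-b)"
  have l: "l > 0" using ab k by (simp add: l_def)
  have gm: "g \<in> borel_measurable lborel" and gnn: "\<And>s. s > 0 \<Longrightarrow> 0 \<le> g s"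
    and gae: "AE s in lborel. s > 0 \<longrightarrow> g s \<le> 1 / s" using g by (auto simp: classG_def)
  have ym: "y \<in> borel_measurable lborel" unfolding y_def by measurable
  have pw: "AE s in lborel.
      ennreal (g s powr (1+a)) * indicator {0<..} s + ennreal l * (ennreal (y s powr (1+b)) * indicator {0<..} s)
    \<le> ennreal (y s powr (1+a)) * indicator {0<..} s + ennreal l * (ennreal (g s powr (1+b)) * indicator {0<..} s)"
    using gae
  proof eventually_elim
    case (elim s)
    show ?case
    proof (cases "s > 0")
      case False then show ?thesis by simp
    next
      case True
      have "ff a b k (g s) \<le> ff a b k (y s)"
        unfolding y_def using pointwise[OF ab k True gnn[OF True]] elim True by auto
      hence r: "g s powr (1+a) + l * y s powr (1+b) \<le> y s powr (1+a) + l * g s powr (1+b)"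
        unfolding ff_def l_def by simp
      have "ennreal (g s powr (1+a)) + ennreal l * ennreal (y s powr (1+b))
          = ennreal (g s powr (1+a) + l * y s powr (1+b))"
        using l by (simp add: ennreal_mult ennreal_plus)
      also have "\<dots> \<le> ennreal (y s powr (1+a) + l * g s powr (1+b))"
        using r by (rule ennreal_leI)
      also have "\<dots> = ennreal (y s powr (1+a)) + ennreal l * ennreal (g s powr (1+b))"
        using l by (simp add: ennreal_mult ennreal_plus)
      finally show ?thesis using True by simp
    qed
  qed
  have "Ipow a g + ennreal l * Ipow b y = 
      (\<integral>\<^sup>+ s. ennreal (g s powr (1+a)) * indicator {0<..} s + ennreal l * (ennreal (y s powr (1+b)) * indicator {0<..} s) \<partial>lborel)"
    unfolding Ipow_def using gm ym
    by (subst nn_integral_add) (auto simp: nn_integral_cmult)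
  also have "\<dots> \<le> (\<integral>\<^sup>+ s. ennreal (y s powr (1+a)) * indicator {0<..} s + ennreal l * (ennreal (g s powr (1+b)) * indicator {0<..} s) \<partial>lborel)"
    by (rule nn_integral_mono_AE[OF pw])
  also have "\<dots> = Ipow a y + ennreal l * Ipow b g"
    unfolding Ipow_def using gm ym
    by (subst nn_integral_add) (auto simp: nn_integral_cmult)
  finally have "Ipow a g + ennreal l * Ipow b y \<le> Ipow a y + ennreal l * Ipow b y"
    using eqb unfolding y_def by simp
  moreover have "ennreal l * Ipow b y \<noteq> \<infinity>"
    unfolding y_def using Ipow_gk[of b k] ab k by (simp add: ennreal_mult_eq_top_iff)
  ultimately show ?thesis unfolding y_def
    by (metis add.commute ennreal_add_left_cancel_le)
qed


lemma upper:
  assumes ab: "0 < a" "a < b" and g: "g \<in> classGb b"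
  shows "ratioF a b g \<le> ennreal ((a + 1) / a * (b / (b + 1)) powr (a / b))"
proof -
  have gG: "g \<in> classG" and pos: "0 < Ipow b g" and fin: "Ipow b g < \<infinity>"
    using g by (auto simp: classGb_def)
  define B where "B = enn2real (Ipow b g)"
  have fin': "Ipow b g < top" using fin by simp
  have ne: "Ipow b g \<noteq> \<infinity>" using fin by (rule less_imp_neq)
  have IB: "Ipow b g = ennreal B" unfolding B_def by (rule ennreal_enn2real[OF fin', symmetric])
  have Bnn: "B \<ge> 0" unfolding B_def by simp
  have Bp: "B > 0"
  proof (rule ccontr)
    assume "\<not> B > 0"
    hence "B = 0" using Bnn by simp
    hence "Ipow b g = 0" using IB by simp
    thus False using pos by simp
  qed
  define k where "k = (B * b / (b+1)) powr (1/b)"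
  have k: "k > 0" using Bp ab by (simp add: k_def)
  have "k powr b = B * b / (b+1)" unfolding k_def using Bp ab by (simp add: powr_powr)
  hence "k powr b * (b+1) / b = B" using ab by (simp add: field_simps)
  hence "Ipow b (\<lambda>s. min k (1 / s)) = ennreal B" using Ipow_gk[of b k] ab k by simp
  hence eqb: "Ipow b g = Ipow b (\<lambda>s. min k (1 / s))" using IB by simp
  have "ratioF a b g = ennreal (B powr (- a / b)) * Ipow a g" unfolding ratioF_def B_def ..
  also have "\<dots> \<le> ennreal (B powr (- a / b)) * Ipow a (\<lambda>s. min k (1 / s))"
    by (intro mult_left_mono Ipow_compare[OF ab k gG eqb]) auto
  also have "\<dots> = ratioF a b (\<lambda>s. min k (1 / s))" unfolding ratioF_def B_def eqb ..
  also have "\<dots> = ennreal ((a + 1) / a * (b / (b + 1)) powr (a / b))" by (rule ratio_gk[OF ab k])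
  finally show ?thesis .
qed

theorem mainTheorem4:
  fixes a b :: real
  assumes "0 < a" and "a < b"
  shows "(SUP g \<in> classGb b. ratioF a b g) = ennreal ((a + 1) / a * (b / (b + 1)) powr (a / b))
         \<and> (\<forall>k::real. k > 0 \<longrightarrow>
             (\<lambda>s. min k (1 / s)) \<in> classGb b \<and>
             ratioF a b (\<lambda>s. min k (1 / s)) = ennreal ((a + 1) / a * (b / (b + 1)) powr (a / b)))"
proof (intro conjI allI impI)
  show "(SUP g \<in> classGb b. ratioF a b g) = ennreal ((a + 1) / a * (b / (b + 1)) powr (a / b))"
  proof (rule antisym)
    show "(SUP g \<in> classGb b. ratioF a b g) \<le> ennreal ((a + 1) / a * (b / (b + 1)) powr (a / b))"
      by (rule SUP_least) (rule upper[OF assms])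
    have "ratioF a b (\<lambda>s. min 1 (1 / s)) \<le> (SUP g \<in> classGb b. ratioF a b g)"
      by (rule SUP_upper) (rule gk_Gb[OF assms], simp)
    thus "ennreal ((a + 1) / a * (b / (b + 1)) powr (a / b)) \<le> (SUP g \<in> classGb b. ratioF a b g)"
      using ratio_gk[OF assms, of 1] by simp
  qed
qed (use gk_Gb[OF assms] ratio_gk[OF assms] in auto)

end
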